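(* Let $n\geqslant 2$, let $C=\{x,y,e_1,\ldots,e_n\}$ and let $U$ be the set of monoid relations on $C$: (U1) $e_i^2=e_i$ for $1\leqslant i\leqslant n$; (U2) $xy=e_n$ and $yx=e_1$; (U3) $xe_1=x$ and $e_1y=y$; (U4) $e_ie_j=e_je_i$ for $1\leqslant i<j\leqslant n$; (U5) $xe_{i+1}=e_ix$ for $1\leqslant i\leqslant n-1$; (U6) $xe_2\cdots e_n=e_1e_2\cdots e_n$. Then $\langle C\mid U\rangle$ is a monoid presentation of $\mathcal{OCI}_n$ (with respect to the map sending each letter to the transformation of the same name). It has $n+2$ generators and $\frac12(n^2+3n+8)$ relations.
   Context: Let $\Omega_n=\{1<\cdots<n\}$, $\mathcal{I}_n$ the symmetric inverse monoid on $\Omega_n$ (maps on the right, composed left to right). $g$ is the permutation $ig=i+1$ ($1\leqslant i\leqslant n-1$), $ng=1$; $\mathcal{C}_n=\{1,g,\ldots,g^{n-1}\}$; $\mathcal{CI}_n=\{\alpha\in\mathcal{I}_n\mid \alpha=\sigma|_{\mathrm{Dom}(\alpha)}\text{ for some }\sigma\in\mathcal{C}_n\}$; $\mathcal{OCI}_n$ is the submonoid of order-preserving elements of $\mathcal{CI}_n$. $e_i$ is the partial identity on $\Omega_n\setminus\{i\}$; $x$ has domain $\{1,\ldots,n-1\}$ with $ix=i+1$; $y=x^{-1}$ has domain $\{2,\ldots,n\}$ with $iy=i-1$. A presentation $\langle C\mid U\rangle$ defines $M$ via an injective map $C\to M$ whose image generates $M$ if the kernel of the induced homomorphism $C^*\to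 M$ is the smallest congruence on $C^*$ containing $U$. *)

theory Defs
  imports Main
begin

text \<open>Maps act on the right and are composed left to right: \<open>pcomp a b\<close> is
  "first a, then b".\<close>

definition pcomp :: "(nat \<rightharpoonup> nat) \<Rightarrow> (nat \<rightharpoonup> nat) \<Rightarrow> (nat \<rightharpoonup> nat)" where
  "pcomp a b = b \<circ>\<^sub>m a"

definition pid :: "nat \<Rightarrow> (nat \<rightharpoonup> nat)" where
  "pid n = (\<lambda>i. if i \<in> {1..n} then Some i else None)"

definition SymInv :: "nat \<Rightarrow> (nat \<rightharpoonup> nat) set" where
  "SymInv n = {a. dom a \<subseteq> {1..n} \<and> ran a \<subseteq> {1..n} \<and> inj_on a (dom a)}"

text \<open>The power \<open>g^k\<close> of the cycle \<open>g = (1 2 ... n)\<close>, as a function on \<open>{1..n}\<close>.\<close>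
definition gpow :: "nat \<Rightarrow> nat \<Rightarrow> nat \<Rightarrow> nat" where
  "gpow n k i = ((i - 1 + k) mod n) + 1"

definition CycGrp :: "nat \<Rightarrow> (nat \<Rightarrow> nat) set" where
  "CycGrp n = {gpow n k | k. k < n}"

definition CI :: "nat \<Rightarrow> (nat \<rightharpoonup> nat) set" where
  "CI n = {a \<in> SymInv n. \<exists>\<sigma> \<in> CycGrp n.
             a = (\<lambda>i. if i \<in> dom a then Some (\<sigma> i) else None)}"

definition OCI :: "nat \<Rightarrow> (nat \<rightharpoonup> nat) set" where
  "OCI n = {a \<in> CI n. \<forall>i \<in> dom a. \<forall>j \<in> dom a. i \<le> j \<longrightarrow> the (a i) \<le> the (a j)}"

definition te :: "nat \<Rightarrow> nat \<Rightarrow> (nat \<rightharpoonup> nat)" where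
  "te n k = (\<lambda>i. if i \<in> {1..n} - {k} then Some i else None)"

definition tx :: "nat \<Rightarrow> (nat \<rightharpoonup> nat)" where
  "tx n = (\<lambda>i. if i \<in> {1..n-1} then Some (i + 1) else None)"

definition ty :: "nat \<Rightarrow> (nat \<rightharpoonup> nat)" where
  "ty n = (\<lambda>i. if i \<in> {2..n} then Some (i - 1) else None)"

datatype letter = X | Y | E nat

definition alphabet :: "nat \<Rightarrow> letter set" where
  "alphabet n = {X, Y} \<union> E ` {1..n}"

fun letter_map :: "nat \<Rightarrow> letter \<Rightarrow> (nat \<rightharpoonup> nat)" where
  "letter_map n X = tx n"
| "letter_map n Y = ty n"
| "letter_map n (E i) = te n i"

definition word_eval :: "nat \<Rightarrow> letter list \<Rightarrow> (nat \<rightharpoonup> nat)" where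
  "word_eval n w = foldl (\<lambda>a c. pcomp a (letter_map n c)) (pid n) w"

inductive gen_cong :: "'a set \<Rightarrow> ('a list \<times> 'a list) set \<Rightarrow> 'a list \<Rightarrow> 'a list \<Rightarrow> bool"
  for A R where
  base: "(u, v) \<in> R \<Longrightarrow> gen_cong A R u v"
| refl: "w \<in> lists A \<Longrightarrow> gen_cong A R w w"
| sym: "gen_cong A R u v \<Longrightarrow> gen_cong A R v u"
| trans: "gen_cong A R u v \<Longrightarrow> gen_cong A R v w \<Longrightarrow> gen_cong A R u w"
| ctxt: "gen_cong A R u v \<Longrightarrow> p \<in> lists A \<Longrightarrow> q \<in> lists A \<Longrightarrow> gen_cong A R (p @ u @ q) (p @ v @ q)"

definition relsU :: "nat \<Rightarrow> (letter list \<times> letter list) set" where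
  "relsU n =
     {([E i, E i], [E i]) | i. 1 \<le> i \<and> i \<le> n}
   \<union> {([X, Y], [E n]), ([Y, X], [E 1])}
   \<union> {([X, E 1], [X]), ([E 1, Y], [Y])}
   \<union> {([E i, E j], [E j, E i]) | i j. 1 \<le> i \<and> i < j \<and> j \<le> n}
   \<union> {([X, E (i + 1)], [E i, X]) | i. 1 \<le> i \<and> i \<le> n - 1}
   \<union> {(X # map E [2..<n+1], map E [1..<n+1])}"

definition is_presentation ::
  "'a set \<Rightarrow> ('a list \<times> 'a list) set \<Rightarrow> ('a \<Rightarrow> 'm) \<Rightarrow> ('a list \<Rightarrow> 'm) \<Rightarrow> 'm set \<Rightarrow> bool" where
  "is_presentation C U f ev M \<longleftrightarrow>
     U \<subseteq> lists C \<times> lists C \<and>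
     inj_on f C \<and> ev ` lists C = M \<and>
     {(u, v). u \<in> lists C \<and> v \<in> lists C \<and> ev u = ev v} = {(u, v). gen_cong C U u v}"

end

theory Submission
  imports Defs
begin


locale L = fixes n :: nat assumes n2: "2 \<le> n" begin

abbreviation cg where "cg \<equiv> gen_cong (alphabet n) (relsU n)"

lemma E_in[simp]: "E i \<in> alphabet n \<longleftrightarrow> 1 \<le> i \<and> i \<le> n"
  by (auto simp: alphabet_def)
lemma XY_in[simp]: "X \<in> alphabet n" "Y \<in> alphabet n"
  by (auto simp: alphabet_def)

lemma relsU_lists: "relsU n \<subseteq> lists (alphabet n) \<times> lists (alphabet n)"
  using n2 by (auto simp: relsU_def)

lemma cg_lists: "cg u v \<Longrightarrow> u \<in> lists (alphabet n) \<and> v \<in> lists (alphabet n)"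
  by (induction rule: gen_cong.induct) (use relsU_lists in auto)

lemma cg_refl: "w \<in> lists (alphabet n) \<Longrightarrow> cg w w" by (rule gen_cong.refl)
lemma cg_sym: "cg u v \<Longrightarrow> cg v u" by (rule gen_cong.sym)
lemma cg_trans: "cg u v \<Longrightarrow> cg v w \<Longrightarrow> cg u w" by (rule gen_cong.trans)

lemma cg_app: "cg u v \<Longrightarrow> cg u' v' \<Longrightarrow> cg (u @ u') (v @ v')"
proof -
  assume a: "cg u v" "cg u' v'"
  from cg_lists[OF a(1)] cg_lists[OF a(2)] have l: "u \<in> lists (alphabet n)" "v \<in> lists (alphabet n)"
     "u' \<in> lists (alphabet n)" "v' \<in> lists (alphabet n)" by auto
  have "cg ([] @ u @ u') ([] @ v @ u')" by (rule gen_cong.ctxt[OF a(1)]) (use l in auto)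
  moreover have "cg (v @ u' @ []) (v @ v' @ [])" by (rule gen_cong.ctxt[OF a(2)]) (use l in auto)
  ultimately show ?thesis by (auto intro: cg_trans)
qed

lemma cg_appL: "p \<in> lists (alphabet n) \<Longrightarrow> cg u v \<Longrightarrow> cg (p @ u) (p @ v)"
  by (rule cg_app[OF cg_refl])
lemma cg_appR: "q \<in> lists (alphabet n) \<Longrightarrow> cg u v \<Longrightarrow> cg (u @ q) (v @ q)"
  by (rule cg_app[OF _ cg_refl])
lemma cg_Cons: "c \<in> alphabet n \<Longrightarrow> cg u v \<Longrightarrow> cg (c # u) (c # v)"
  using cg_appL[of "[c]"] by auto

lemma r_idem: "1 \<le> i \<Longrightarrow> i \<le> n \<Longrightarrow> cg [E i, E i] [E i]"
  by (rule gen_cong.base) (auto simp: relsU_def)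
lemma r_xy: "cg [X, Y] [E n]"
  by (rule gen_cong.base) (auto simp: relsU_def)
lemma r_yx: "cg [Y, X] [E 1]"
  by (rule gen_cong.base) (auto simp: relsU_def)
lemma r_xe1: "cg [X, E 1] [X]"
  by (rule gen_cong.base) (auto simp: relsU_def)
lemma r_e1y: "cg [E 1, Y] [Y]"
  by (rule gen_cong.base) (auto simp: relsU_def)
lemma r_comm: "1 \<le> i \<Longrightarrow> i < j \<Longrightarrow> j \<le> n \<Longrightarrow> cg [E i, E j] [E j, E i]"
  by (rule gen_cong.base) (auto simp: relsU_def)
lemma r_xe: "1 \<le> i \<Longrightarrow> i < n \<Longrightarrow> cg [X, E (i+1)] [E i, X]"
  by (rule gen_cong.base) (auto simp: relsU_def)
lemma r_6: "cg (X # map E [2..<n+1]) (map E [1..<n+1])"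
  by (rule gen_cong.base) (auto simp: relsU_def)

lemma r_ye_n: "cg [Y, E n] [Y]"
proof -
  have "cg [Y, E n] [Y, X, Y]" using cg_Cons[OF _ cg_sym[OF r_xy]] by simp
  moreover have "cg [Y, X, Y] [E 1, Y]" using cg_appR[OF _ r_yx, of "[Y]"] by simp
  ultimately show ?thesis using r_e1y cg_trans by blast
qed

lemma r_en_x: "cg [E n, X] [X]"
proof -
  have "cg [E n, X] [X, Y, X]" using cg_appR[OF _ cg_sym[OF r_xy], of "[X]"] by simp
  moreover have "cg [X, Y, X] [X, E 1]" using cg_Cons[OF _ r_yx] by simp
  ultimately show ?thesis using r_xe1 cg_trans by blast
qed

lemma r_ey: assumes "1 \<le> i" "i < n" shows "cg [E (i+1), Y] [Y, E i]"
proof -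
  have "cg [E (i+1), Y] [E (i+1), E 1, Y]" using cg_Cons[OF _ cg_sym[OF r_e1y], of "E (i+1)"] assms by simp
  moreover have "cg [E (i+1), E 1, Y] [E 1, E (i+1), Y]"
    using cg_appR[OF _ cg_sym[OF r_comm[of 1 "i+1"]], of "[Y]"] assms by simp
  moreover have "cg [E 1, E (i+1), Y] [Y, X, E (i+1), Y]"
    using cg_appR[OF _ cg_sym[OF r_yx], of "[E (i+1), Y]"] assms by simp
  moreover have "cg [Y, X, E (i+1), Y] [Y, E i, X, Y]"
    using cg_appL[OF _ cg_appR[OF _ r_xe[OF assms]], of "[Y]" "[Y]"] by simp
  moreover have "cg [Y, E i, X, Y] [Y, E i, E n]"
    using cg_appL[OF _ r_xy, of "[Y, E i]"] assms by simp
  moreover have "cg [Y, E i, E n] [Y, E n, E i]"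
    using cg_appL[OF _ r_comm[of i n], of "[Y]"] assms by simp
  moreover have "cg [Y, E n, E i] [Y, E i]"
    using cg_appR[OF _ r_ye_n, of "[E i]"] assms by simp
  ultimately show ?thesis by (meson cg_trans)
qed

end


lemma sl_id: "sorted s \<Longrightarrow> distinct s \<Longrightarrow> sorted_list_of_set (set s) = s"
  by (rule sorted_distinct_set_unique) auto

lemma sl_unique: "sorted s \<Longrightarrow> distinct s \<Longrightarrow> set s = A \<Longrightarrow> sorted_list_of_set A = s"
  using sl_id by blast

context L begin

lemma map_E_lists[simp]: "map E l \<in> lists (alphabet n) \<longleftrightarrow> set l \<subseteq> {1..n}"
  by (auto simp: subset_iff)

lemma ins_lemma:
  assumes "sorted s" "distinct s" "set s \<subseteq> {1..n}" "1 \<le> a" "a \<le> n"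
  shows "cg (map E s @ [E a]) (map E (sorted_list_of_set (insert a (set s))))"
  using assms
proof (induction s rule: rev_induct)
  case Nil
  then show ?case by (auto intro: cg_refl)
next
  case (snoc b s)
  have bs: "\<forall>x\<in>set s. x < b" using snoc.prems(1,2) by (auto simp: sorted_append) (metis le_neq_implies_less)
  have sd: "sorted s" "distinct s" "set s \<subseteq> {1..n}" using snoc.prems by (auto simp: sorted_append)
  have b1: "1 \<le> b" "b \<le> n" using snoc.prems by auto
  consider "a = b" | "b < a" | "a < b" by linarith
  then show ?case
  proof cases
    case 1
    have "cg (map E s @ [E b, E b]) (map E s @ [E b])"
      by (rule cg_appL) (use sd b1 r_idem in auto)
    moreover have "sorted_list_of_set (insert a (set (s @ [b]))) = s @ [b]"
      using 1 snoc.prems by (intro sl_unique) auto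
    ultimately show ?thesis using 1 by simp
  next
    case 2
    have eq: "sorted_list_of_set (insert a (set (s @ [b]))) = s @ [b] @ [a]"
      using 2 snoc.prems bs by (intro sl_unique) (auto simp: sorted_append)
    show ?thesis unfolding eq using cg_refl[of "map E (s @ [b] @ [a])"] snoc.prems by auto
  next
    case 3
    have "cg (map E s @ [E b, E a]) (map E s @ [E a, E b])"
      by (rule cg_appL) (use sd b1 cg_sym[OF r_comm[of a b]] 3 snoc.prems in auto)
    moreover have "cg ((map E s @ [E a]) @ [E b]) (map E (sorted_list_of_set (insert a (set s))) @ [E b])"
      by (rule cg_appR) (use snoc.IH sd snoc.prems b1 in auto)
    moreover have "sorted_list_of_set (insert a (set (s @ [b]))) = sorted_list_of_set (insert a (set s)) @ [b]"
    proof (rule sl_unique)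
      define L where "L = sorted_list_of_set (insert a (set s))"
      have L: "sorted L" "distinct L" "set L = insert a (set s)" unfolding L_def
        by (simp_all del: sorted_list_of_set_insert_remove sorted_list_of_set_insert)
      show "sorted (sorted_list_of_set (insert a (set s)) @ [b])"
        unfolding L_def[symmetric] using 3 bs L by (auto simp: sorted_append)
      show "distinct (sorted_list_of_set (insert a (set s)) @ [b])"
        unfolding L_def[symmetric] using 3 bs L by auto
      show "set (sorted_list_of_set (insert a (set s)) @ [b]) = insert a (set (s @ [b]))"
        unfolding L_def[symmetric] using L by auto
    qed
    ultimately show ?thesis by (auto intro: cg_trans)
  qed
qed

lemma sort_lemma:
  assumes "set l \<subseteq> {1..n}"
  shows "cg (map E l) (map E (sorted_list_of_set (set l)))"
  using assms
proof (induction l rule: rev_induct)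
  case Nil
  then show ?case by (auto intro: cg_refl)
next
  case (snoc a l)
  have "cg (map E l @ [E a]) (map E (sorted_list_of_set (set l)) @ [E a])"
    by (rule cg_appR) (use snoc in auto)
  moreover have "cg (map E (sorted_list_of_set (set l)) @ [E a]) (map E (sorted_list_of_set (insert a (set l))))"
    using ins_lemma[of "sorted_list_of_set (set l)" a] snoc.prems by auto
  ultimately show ?case by (auto intro: cg_trans)
qed

lemma perm_lemma:
  assumes "set l \<subseteq> {1..n}" "set l' = set l"
  shows "cg (map E l) (map E l')"
  using sort_lemma[OF assms(1)] sort_lemma[of l'] assms by (auto intro: cg_trans cg_sym)

end


lemma rep_snoc: "replicate (Suc m) c = replicate m c @ [c]"
  by (simp add: replicate_append_same)

context L begin

lemma rep_lists[simp]: "replicate k X \<in> lists (alphabet n)" "replicate k Y \<in> lists (alphabet n)"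
  by auto

lemma xpow_e: "1 \<le> i \<Longrightarrow> i \<le> k \<Longrightarrow> i \<le> n \<Longrightarrow> cg (replicate k X @ [E i]) (replicate k X)"
proof (induction i arbitrary: k)
  case 0
  then show ?case by simp
next
  case (Suc j)
  then obtain m where k: "k = Suc m" by (cases k) auto
  show ?case
  proof (cases "j = 0")
    case True
    have "cg (replicate m X @ [X, E 1]) (replicate m X @ [X])" by (rule cg_appL[OF _ r_xe1]) simp
    then show ?thesis using True k by (simp only: rep_snoc append_assoc append.simps) simp
  next
    case False
    have "cg (replicate m X @ [X, E (j+1)]) (replicate m X @ [E j, X])"
      by (rule cg_appL[OF _ r_xe]) (use False Suc.prems in auto)
    moreover have "cg ((replicate m X @ [E j]) @ [X]) (replicate m X @ [X])"
      by (rule cg_appR) (use Suc.IH[of m] False Suc.prems k in auto)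
    ultimately show ?thesis using k by (simp only: rep_snoc append_assoc append.simps) (auto intro: cg_trans)
  qed
qed

lemma xabs: "set s \<subseteq> {1..k} \<Longrightarrow> k \<le> n \<Longrightarrow> cg (replicate k X @ map E s) (replicate k X)"
proof (induction s rule: rev_induct)
  case Nil
  then show ?case by (auto intro: cg_refl)
next
  case (snoc a s)
  have "cg ((replicate k X @ map E s) @ [E a]) (replicate k X @ [E a])"
    by (rule cg_appR) (use snoc in auto)
  moreover have "cg (replicate k X @ [E a]) (replicate k X)"
    by (rule xpow_e) (use snoc in auto)
  ultimately show ?case by (auto intro: cg_trans)
qed

lemma ypow_e: "1 \<le> i \<Longrightarrow> 1 \<le> k \<Longrightarrow> n < i + k \<Longrightarrow> i \<le> n \<Longrightarrow> cg (replicate k Y @ [E i]) (replicate k Y)"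
proof (induction "n - i" arbitrary: i k)
  case 0
  then have i: "i = n" by simp
  obtain m where k: "k = Suc m" using 0 by (cases k) auto
  have "cg (replicate m Y @ [Y, E n]) (replicate m Y @ [Y])" by (rule cg_appL[OF _ r_ye_n]) simp
  then show ?case using i k by (simp only: rep_snoc append_assoc append.simps)
next
  case (Suc d)
  obtain m where k: "k = Suc m" using Suc by (cases k) auto
  have m1: "1 \<le> m" using Suc k by simp
  have i1: "1 \<le> i" "i < n" using Suc k by auto
  have "cg (replicate m Y @ [Y, E i]) (replicate m Y @ [E (i+1), Y])"
    by (rule cg_appL[OF _ cg_sym[OF r_ey]]) (use i1 in auto)
  moreover have "cg ((replicate m Y @ [E (i+1)]) @ [Y]) (replicate m Y @ [Y])"
    by (rule cg_appR) (use Suc.hyps(1)[of "i+1" m] Suc.hyps(2) Suc.prems k m1 i1 in auto)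
  ultimately show ?case using k by (simp only: rep_snoc append_assoc append.simps) (auto intro: cg_trans)
qed

lemma yabs: "set s \<subseteq> {i. n < i + k \<and> 1 \<le> i \<and> i \<le> n} \<Longrightarrow> 1 \<le> k \<Longrightarrow> cg (replicate k Y @ map E s) (replicate k Y)"
proof (induction s rule: rev_induct)
  case Nil
  then show ?case by (auto intro: cg_refl)
next
  case (snoc a s)
  have a: "1 \<le> a" "a \<le> n" "n < a + k" using snoc n2 by auto
  have "set s \<subseteq> {1..n}" using snoc.prems(1) by auto
  then have "cg ((replicate k Y @ map E s) @ [E a]) (replicate k Y @ [E a])"
    by (intro cg_appR) (use snoc a in auto)
  moreover have "cg (replicate k Y @ [E a]) (replicate k Y)"
    by (rule ypow_e) (use snoc a in auto)
  ultimately show ?case by (auto intro: cg_trans)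
qed

lemma shiftdown_lists: "set s \<subseteq> {1..n} \<Longrightarrow> map E (map (\<lambda>i. i - 1) (filter (\<lambda>i. 1 < i) s)) \<in> lists (alphabet n)"
proof -
  assume "set s \<subseteq> {1..n}"
  then have "\<forall>x\<in>set s. 1 < x \<longrightarrow> 1 \<le> x - 1 \<and> x - 1 \<le> n" by auto
  then show ?thesis by auto
qed

lemma shiftup_lists: "set s \<subseteq> {1..n} \<Longrightarrow> map E (map Suc (filter (\<lambda>i. i < n) s)) \<in> lists (alphabet n)"
proof -
  assume "set s \<subseteq> {1..n}"
  then have "\<forall>x\<in>set s. x < n \<longrightarrow> 1 \<le> Suc x \<and> Suc x \<le> n" by auto
  then show ?thesis by auto
qed

lemma ex_lemma: "set s \<subseteq> {1..n} \<Longrightarrow> cg (map E s @ [X]) (X # map E (map Suc (filter (\<lambda>i. i < n) s)))"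
proof (induction s)
  case Nil
  then show ?case by (auto intro: cg_refl)
next
  case (Cons a s)
  have IH: "cg ([E a] @ (map E s @ [X])) ([E a] @ (X # map E (map Suc (filter (\<lambda>i. i < n) s))))"
    by (rule cg_appL) (use Cons in auto)
  show ?case
  proof (cases "a < n")
    case True
    have "cg ([E a, X] @ map E (map Suc (filter (\<lambda>i. i < n) s))) ([X, E (a+1)] @ map E (map Suc (filter (\<lambda>i. i < n) s)))"
      by (rule cg_appR[OF _ cg_sym[OF r_xe]]) (use Cons True in auto)
    then show ?thesis using IH True by (auto intro: cg_trans)
  next
    case False
    then have "a = n" using Cons by auto
    have "cg ([E a, X] @ map E (map Suc (filter (\<lambda>i. i < n) s))) ([X] @ map E (map Suc (filter (\<lambda>i. i < n) s)))"
      by (rule cg_appR[OF _ ]) (use Cons \<open>a = n\<close> r_en_x in auto)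
    then show ?thesis using IH False by (auto intro: cg_trans)
  qed
qed

lemma ey_lemma: "set s \<subseteq> {1..n} \<Longrightarrow> cg (map E s @ [Y]) (Y # map E (map (\<lambda>i. i - 1) (filter (\<lambda>i. 1 < i) s)))"
proof (induction s)
  case Nil
  then show ?case by (auto intro: cg_refl)
next
  case (Cons a s)
  have IH: "cg ([E a] @ (map E s @ [Y])) ([E a] @ (Y # map E (map (\<lambda>i. i - 1) (filter (\<lambda>i. 1 < i) s))))"
    by (rule cg_appL) (use Cons in auto)
  show ?case
  proof (cases "1 < a")
    case True
    have "cg ([E ((a - 1) + 1), Y] @ map E (map (\<lambda>i. i - 1) (filter (\<lambda>i. 1 < i) s))) ([Y, E (a - 1)] @ map E (map (\<lambda>i. i - 1) (filter (\<lambda>i. 1 < i) s)))"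
      by (rule cg_appR[OF shiftdown_lists r_ey]) (use Cons True in auto)
    then show ?thesis using IH True by (auto intro: cg_trans)
  next
    case False
    then have "a = 1" using Cons by auto
    have "cg ([E a, Y] @ map E (map (\<lambda>i. i - 1) (filter (\<lambda>i. 1 < i) s))) ([Y] @ map E (map (\<lambda>i. i - 1) (filter (\<lambda>i. 1 < i) s)))"
      by (rule cg_appR[OF shiftdown_lists]) (use Cons \<open>a = 1\<close> r_e1y in auto)
    then show ?thesis using IH False by (auto intro: cg_trans)
  qed
qed

end

declare upt_Suc[simp del]
context L begin
abbreviation Z where "Z \<equiv> map E [1..<n+1]"
lemma Z_cons: "Z = E 1 # map E [2..<n+1]"
  using n2 upt_conv_Cons[of 1 "n+1"] by (simp add: numeral_2_eq_2)
lemma yZ: "cg (Y # Z) Z"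
proof -
  have 1: "cg (Y # Z) (Y # X # map E [2..<n+1])"
    by (rule cg_Cons[OF _ cg_sym[OF r_6]]) auto
  have "cg ([Y, X] @ map E [2..<n+1]) ([E 1] @ map E [2..<n+1])"
    by (rule cg_appR[OF _ r_yx]) auto
  then have 2: "cg (Y # X # map E [2..<n+1]) Z" using Z_cons by simp
  show ?thesis by (rule cg_trans[OF 1 2])
qed
lemma Zperm: "set l = {1..n} \<Longrightarrow> cg (map E l) Z"
proof -
  assume a: "set l = {1..n}"
  have b: "set [1..<n+1] = {1..n}" by (simp add: atLeastLessThanSuc_atLeastAtMost)
  show ?thesis by (rule perm_lemma) (use a b in simp_all)
qed
end 

context L begin

lemma set_Z: "set [1..<n+1] = {1..n}" by (simp add: atLeastLessThanSuc_atLeastAtMost)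

lemma perm2: "set l = A \<Longrightarrow> set l' = A \<Longrightarrow> A \<subseteq> {1..n} \<Longrightarrow> cg (map E l) (map E l')"
  by (rule perm_lemma) simp_all

lemma Z_refl: "cg Z Z" by (rule cg_refl) (simp add: atLeastLessThanSuc_atLeastAtMost)

lemma xZ: "cg (X # Z) Z"
proof -
  have "cg ([X, E 1] @ map E [2..<n+1]) ([X] @ map E [2..<n+1])"
    by (rule cg_appR[OF _ r_xe1]) auto
  then have 1: "cg (X # Z) (X # map E [2..<n+1])" using Z_cons by simp
  show ?thesis by (rule cg_trans[OF 1 r_6])
qed

lemma Zx: "cg (Z @ [X]) Z"
proof -
  have s1: "set (n # [1..<n]) = {1..n}" using n2 by auto
  have 1: "cg (Z @ [X]) (map E (n # [1..<n]) @ [X])"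
    by (rule cg_appR[OF _ perm2[OF set_Z s1]]) auto
  have eq: "map Suc (filter (\<lambda>i. i < n) [1..<n]) = [2..<n+1]"
    by (simp add: map_Suc_upt numeral_2_eq_2)
  have "cg ([E n] @ (map E [1..<n] @ [X])) ([E n] @ (X # map E (map Suc (filter (\<lambda>i. i < n) [1..<n]))))"
    by (rule cg_appL[OF _ ex_lemma]) (use n2 in auto)
  from this[unfolded eq] have 2: "cg (map E (n # [1..<n]) @ [X]) (E n # X # map E [2..<n+1])" by simp
  have 3: "cg (E n # X # map E [2..<n+1]) (E n # Z)"
    by (rule cg_Cons[OF _ r_6]) (use n2 in auto)
  have s2: "set (n # [1..<n+1]) = {1..n}" by (simp only: list.set(2) set_Z) (use n2 in auto)
  have 4: "cg (E n # Z) Z"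
    using Zperm[OF s2] by simp
  show ?thesis by (rule cg_trans[OF 1 cg_trans[OF 2 cg_trans[OF 3 4]]])
qed

lemma Zy: "cg (Z @ [Y]) Z"
proof -
  have 1: "cg (Z @ [Y]) (Y # map E (map (\<lambda>i. i - 1) (filter (\<lambda>i. 1 < i) [1..<n+1])))"
    by (rule ey_lemma) (simp add: atLeastLessThanSuc_atLeastAtMost)
  have eq: "map (\<lambda>i. i - 1) (filter (\<lambda>i. 1 < i) [1..<n+1]) = [1..<n]"
  proof -
    have c: "[1..<n+1] = 1 # [2..<n+1]"
      using n2 upt_conv_Cons[of 1 "n+1"] by (simp add: numeral_2_eq_2)
    have "filter (\<lambda>i. 1 < i) [2..<n+1] = [2..<n+1]" by (rule filter_True) auto
    then have "filter (\<lambda>i. 1 < i) [1..<n+1] = [2..<n+1]" by (subst c) simp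
    moreover have "map (\<lambda>i. i - 1) [2..<n+1] = [1..<n]"
      by (rule nth_equalityI) auto
    ultimately show ?thesis by simp
  qed
  from 1[unfolded eq] have 1: "cg (Z @ [Y]) (Y # map E [1..<n])" .
  have "cg ([Y] @ map E [1..<n]) ([Y, E n] @ map E [1..<n])"
    by (rule cg_appR[OF _ cg_sym[OF r_ye_n]]) auto
  then have 2: "cg (Y # map E [1..<n]) (Y # map E (n # [1..<n]))" by simp
  have s2: "set (n # [1..<n]) = {1..n}" using n2 by auto
  have 3: "cg (Y # map E (n # [1..<n])) (Y # Z)"
    by (rule cg_Cons[OF _ Zperm[OF s2]]) auto
  show ?thesis by (rule cg_trans[OF 1 cg_trans[OF 2 cg_trans[OF 3 yZ]]])
qed

lemma Ze: assumes "1 \<le> i" "i \<le> n" shows "cg (Z @ [E i]) Z"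
proof -
  have "set ([1..<n+1] @ [i]) = {1..n}" by (simp only: set_append set_Z) (use assms in auto)
  from Zperm[OF this] show ?thesis by simp
qed

lemma Zw: "w \<in> lists (alphabet n) \<Longrightarrow> cg (Z @ w) Z"
proof (induction w rule: rev_induct)
  case Nil
  then show ?case using Z_refl by simp
next
  case (snoc c w)
  have 1: "cg ((Z @ w) @ [c]) (Z @ [c])" by (rule cg_appR) (use snoc in auto)
  have 2: "cg (Z @ [c]) Z"
    using snoc.prems Zx Zy Ze by (cases c) (auto simp: alphabet_def)
  show ?case using cg_trans[OF 1 2] by simp
qed

lemma xpowZ: "cg (replicate m X @ Z) Z"
proof (induction m)
  case 0
  then show ?case using Z_refl by simp
next
  case (Suc m)
  have "cg (X # (replicate m X @ Z)) (X # Z)" by (rule cg_Cons) (use Suc in auto)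
  then show ?case using cg_trans[OF _ xZ] by simp
qed

lemma ypowZ: "cg (replicate m Y @ Z) Z"
proof (induction m)
  case 0
  then show ?case using Z_refl by simp
next
  case (Suc m)
  have "cg (Y # (replicate m Y @ Z)) (Y # Z)" by (rule cg_Cons) (use Suc in auto)
  then show ?case using cg_trans[OF _ yZ] by simp
qed

end 


lemma upt_split: "i \<le> j \<Longrightarrow> j \<le> k \<Longrightarrow> [i..<j] @ [j..<k] = [i..<k]"
  using upt_add_eq_append[of i j "k-j"] by simp

lemma sl_interval: "sorted_list_of_set {a..b} = [a..<b+1]"
  by (metis atLeastLessThanSuc_atLeastAtMost sorted_list_of_set_range Suc_eq_plus1)

context L begin

lemma xzero: assumes "1 \<le> k" "k \<le> n" shows "cg (replicate k X @ map E [k+1..<n+1]) Z"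
proof -
  have a: "cg (replicate k X @ map E [2..<k+1]) (replicate k X)"
    by (rule xabs) (use assms in auto)
  have b: "cg (replicate k X @ map E [k+1..<n+1]) ((replicate k X @ map E [2..<k+1]) @ map E [k+1..<n+1])"
    by (rule cg_appR[OF _ cg_sym[OF a]]) (use assms in auto)
  have c: "[2..<k+1] @ [k+1..<n+1] = [2..<n+1]"
    by (rule upt_split) (use assms in auto)
  obtain m where m: "k = Suc m" using assms by (cases k) auto
  have d: "cg (replicate m X @ (X # map E [2..<n+1])) (replicate m X @ Z)"
    by (rule cg_appL[OF _ r_6]) auto
  have e: "(replicate k X @ map E [2..<k+1]) @ map E [k+1..<n+1] = replicate m X @ (X # map E [2..<n+1])"
    using c m by (simp add: replicate_append_same flip: map_append)
  show ?thesis using cg_trans[OF b[unfolded e] cg_trans[OF d xpowZ]] .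
qed

lemma yzero: assumes "1 \<le> k" "k \<le> n" shows "cg (replicate k Y @ map E [1..<n-k+1]) Z"
proof -
  have a: "cg (replicate k Y @ map E [n-k+1..<n+1]) (replicate k Y)"
    by (rule yabs) (use assms in auto)
  have b: "cg (replicate k Y @ map E [1..<n-k+1]) ((replicate k Y @ map E [n-k+1..<n+1]) @ map E [1..<n-k+1])"
    by (rule cg_appR[OF _ cg_sym[OF a]]) (use assms in auto)
  have s: "set ([n-k+1..<n+1] @ [1..<n-k+1]) = {1..n}" using assms by auto
  have c: "cg (replicate k Y @ map E ([n-k+1..<n+1] @ [1..<n-k+1])) (replicate k Y @ Z)"
    by (rule cg_appL[OF _ Zperm[OF s]]) auto
  show ?thesis using cg_trans[OF b cg_trans[OF _ ypowZ]] c by simp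
qed

definition NF :: "letter list set" where
  "NF = {map E (sorted_list_of_set S) | S. S \<subseteq> {1..n}}
      \<union> {replicate k X @ map E (sorted_list_of_set S) | k S. 1 \<le> k \<and> k < n \<and> S \<subseteq> {k+1..n} \<and> S \<noteq> {k+1..n}}
      \<union> {replicate k Y @ map E (sorted_list_of_set S) | k S. 1 \<le> k \<and> k < n \<and> S \<subseteq> {1..n-k} \<and> S \<noteq> {1..n-k}}"

lemma Z_NF: "Z \<in> NF"
proof -
  have "Z = map E (sorted_list_of_set {1..n})" by (simp only: sl_interval)
  then show ?thesis unfolding NF_def by blast
qed

lemma N0gen: "set t \<subseteq> {1..n} \<Longrightarrow> \<exists>w\<in>NF. cg (map E t) w"
  using sort_lemma[of t] unfolding NF_def by blast

lemma NXgen: assumes "1 \<le> k" "k \<le> n" "set t \<subseteq> {1..n}"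
  shows "\<exists>w\<in>NF. cg (replicate k X @ map E t) w"
proof -
  define T where "T = set (filter (\<lambda>i. k < i) t)"
  have fT: "finite T" unfolding T_def by simp
  have T: "T \<subseteq> {k+1..n}" using assms unfolding T_def by auto
  have p1: "cg (map E t) (map E (filter (\<lambda>i. i \<le> k) t @ sorted_list_of_set T))"
    by (rule perm_lemma) (use assms fT in \<open>auto simp: T_def\<close>)
  have p2: "cg (replicate k X @ map E t) ((replicate k X @ map E (filter (\<lambda>i. i \<le> k) t)) @ map E (sorted_list_of_set T))"
    using cg_appL[OF _ p1, of "replicate k X"] by simp
  have p3: "cg ((replicate k X @ map E (filter (\<lambda>i. i \<le> k) t)) @ map E (sorted_list_of_set T)) (replicate k X @ map E (sorted_list_of_set T))"
    by (rule cg_appR[OF _ xabs]) (use assms T fT in auto)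
  have p: "cg (replicate k X @ map E t) (replicate k X @ map E (sorted_list_of_set T))"
    by (rule cg_trans[OF p2 p3])
  show ?thesis
  proof (cases "T = {k+1..n}")
    case True
    then have q: "sorted_list_of_set T = [k+1..<n+1]" by (simp only: sl_interval)
    show ?thesis using cg_trans[OF p[unfolded q] xzero[OF assms(1,2)]] Z_NF by auto
  next
    case False
    then have "k < n" using T assms by (cases "k = n") auto
    then have "replicate k X @ map E (sorted_list_of_set T) \<in> NF"
      unfolding NF_def using T False assms by blast
    then show ?thesis using p by blast
  qed
qed

lemma NYgen: assumes "1 \<le> k" "k \<le> n" "set t \<subseteq> {1..n}"
  shows "\<exists>w\<in>NF. cg (replicate k Y @ map E t) w"
proof -
  define T where "T = set (filter (\<lambda>i. i \<le> n - k) t)"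
  have fT: "finite T" unfolding T_def by simp
  have T: "T \<subseteq> {1..n-k}" using assms unfolding T_def by auto
  have p1: "cg (map E t) (map E (filter (\<lambda>i. n - k < i) t @ sorted_list_of_set T))"
    by (rule perm_lemma) (use assms fT in \<open>auto simp: T_def\<close>)
  have p2: "cg (replicate k Y @ map E t) ((replicate k Y @ map E (filter (\<lambda>i. n - k < i) t)) @ map E (sorted_list_of_set T))"
    using cg_appL[OF _ p1, of "replicate k Y"] by simp
  have p3: "cg ((replicate k Y @ map E (filter (\<lambda>i. n - k < i) t)) @ map E (sorted_list_of_set T)) (replicate k Y @ map E (sorted_list_of_set T))"
  proof (rule cg_appR[OF _ yabs])
    have "{1..n-k} \<subseteq> {1..n}" by auto
    with T have "T \<subseteq> {1..n}" by (rule subset_trans)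
    then show "map E (sorted_list_of_set T) \<in> lists (alphabet n)" using fT by simp
  qed (use assms in auto)
  have p: "cg (replicate k Y @ map E t) (replicate k Y @ map E (sorted_list_of_set T))"
    by (rule cg_trans[OF p2 p3])
  show ?thesis
  proof (cases "T = {1..n-k}")
    case True
    then have q: "sorted_list_of_set T = [1..<n-k+1]" by (simp only: sl_interval)
    show ?thesis using cg_trans[OF p[unfolded q] yzero[OF assms(1,2)]] Z_NF by auto
  next
    case False
    then have "k < n" using T assms by (cases "k = n") auto
    then have "replicate k Y @ map E (sorted_list_of_set T) \<in> NF"
      unfolding NF_def using T False assms by blast
    then show ?thesis using p by blast
  qed
qed

end 

context L begin

lemma shiftdown_set: "set s \<subseteq> {1..n} \<Longrightarrow> set (map (\<lambda>i. i - 1) (filter (\<lambda>i. 1 < i) s)) \<subseteq> {1..n}"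
  using shiftdown_lists[of s] by (simp only: map_E_lists)
lemma shiftup_set: "set s \<subseteq> {1..n} \<Longrightarrow> set (map Suc (filter (\<lambda>i. i < n) s)) \<subseteq> {1..n}"
  using shiftup_lists[of s] by (simp only: map_E_lists)

lemma gen_trans: "cg u v \<Longrightarrow> \<exists>w\<in>NF. cg v w \<Longrightarrow> \<exists>w\<in>NF. cg u w"
  using cg_trans by blast

lemma NF_cases:
  assumes "w \<in> NF"
  obtains s where "w = map E s" "set s \<subseteq> {1..n}"
  | k s where "w = replicate k X @ map E s" "set s \<subseteq> {1..n}" "1 \<le> k" "k < n"
  | k s where "w = replicate k Y @ map E s" "set s \<subseteq> {1..n}" "1 \<le> k" "k < n"
proof -
  from assms consider (a) S where "w = map E (sorted_list_of_set S)" "S \<subseteq> {1..n}"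
    | (b) k S where "w = replicate k X @ map E (sorted_list_of_set S)" "1 \<le> k" "k < n" "S \<subseteq> {k+1..n}"
    | (c) k S where "w = replicate k Y @ map E (sorted_list_of_set S)" "1 \<le> k" "k < n" "S \<subseteq> {1..n-k}"
    unfolding NF_def by blast
  then show ?thesis
  proof cases
    case a
    have "finite S" using a(2) finite_subset by blast
    then show ?thesis using that(1)[of "sorted_list_of_set S"] a by simp
  next
    case b
    have "finite S" using b(4) finite_subset by blast
    moreover have "S \<subseteq> {1..n}" using b(4) by (meson atLeastatMost_subset_iff order_trans le_add2 order_refl)
    ultimately show ?thesis using that(2)[of k "sorted_list_of_set S"] b by simp
  next
    case c
    have "finite S" using c(4) finite_subset by blast
    moreover have "S \<subseteq> {1..n}" using c(4) by (meson atLeastatMost_subset_iff order_trans diff_le_self order_refl)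
    ultimately show ?thesis using that(3)[of k "sorted_list_of_set S"] c by simp
  qed
qed

lemma closure:
  assumes w: "w \<in> NF" and c: "c \<in> alphabet n"
  shows "\<exists>w'\<in>NF. cg (w @ [c]) w'"
  using w
proof (cases rule: NF_cases)
  case (1 s)
  show ?thesis
  proof (cases c)
    case X
    have "\<exists>w\<in>NF. cg (replicate 1 X @ map E (map Suc (filter (\<lambda>i. i < n) s))) w"
      by (rule NXgen) (use n2 shiftup_set[OF 1(2)] in auto)
    then show ?thesis using gen_trans[OF ex_lemma[OF 1(2)]] 1 X by simp
  next
    case Y
    have "\<exists>w\<in>NF. cg (replicate 1 Y @ map E (map (\<lambda>i. i - 1) (filter (\<lambda>i. 1 < i) s))) w"
      by (rule NYgen) (use n2 shiftdown_set[OF 1(2)] in auto)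
    then show ?thesis using gen_trans[OF ey_lemma[OF 1(2)]] 1 Y by simp
  next
    case (E i)
    have "\<exists>w\<in>NF. cg (map E (s @ [i])) w" by (rule N0gen) (use 1 c E in auto)
    then show ?thesis using 1 E by simp
  qed
next
  case (2 k s)
  show ?thesis
  proof (cases c)
    case X
    have "\<exists>w\<in>NF. cg (replicate (Suc k) X @ map E (map Suc (filter (\<lambda>i. i < n) s))) w"
      by (rule NXgen) (use 2 shiftup_set[OF 2(2)] in auto)
    moreover have "cg (replicate k X @ (map E s @ [X])) (replicate k X @ (X # map E (map Suc (filter (\<lambda>i. i < n) s))))"
      by (rule cg_appL[OF _ ex_lemma[OF 2(2)]]) simp
    ultimately show ?thesis using gen_trans 2 X by (simp add: replicate_app_Cons_same)
  next
    case Y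
    obtain m where m: "k = Suc m" using 2 by (cases k) auto
    let ?s = "map (\<lambda>i. i - 1) (filter (\<lambda>i. 1 < i) s)"
    have a: "cg (replicate k X @ (map E s @ [Y])) (replicate k X @ (Y # map E ?s))"
      by (rule cg_appL[OF _ ey_lemma[OF 2(2)]]) simp
    have b: "cg (replicate m X @ ([X, Y] @ map E ?s)) (replicate m X @ ([E n] @ map E ?s))"
      by (rule cg_appL[OF _ cg_appR[OF _ r_xy]]) (use shiftdown_lists[OF 2(2)] in auto)
    have ss: "set (n # ?s) \<subseteq> {1..n}" using shiftdown_set[OF 2(2)] n2 by auto
    have c: "\<exists>w\<in>NF. cg (replicate m X @ map E (n # ?s)) w"
    proof (cases "m = 0")
      case True
      then show ?thesis using N0gen[OF ss] by simp
    next
      case False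
      then show ?thesis by (intro NXgen ss) (use m 2 in auto)
    qed
    have a': "cg (w @ [c]) (replicate m X @ ([X, Y] @ map E ?s))"
      using a 2 Y m by (simp add: replicate_app_Cons_same)
    have "cg (w @ [c]) (replicate m X @ map E (n # ?s))"
      using cg_trans[OF a' b] by simp
    then show ?thesis using gen_trans c by blast
  next
    case (E i)
    have "\<exists>w\<in>NF. cg (replicate k X @ map E (s @ [i])) w" by (rule NXgen) (use 2 c E in auto)
    then show ?thesis using 2 E by simp
  qed
next
  case (3 k s)
  show ?thesis
  proof (cases c)
    case Y
    have "\<exists>w\<in>NF. cg (replicate (Suc k) Y @ map E (map (\<lambda>i. i - 1) (filter (\<lambda>i. 1 < i) s))) w"
      by (rule NYgen) (use 3 shiftdown_set[OF 3(2)] in auto)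
    moreover have "cg (replicate k Y @ (map E s @ [Y])) (replicate k Y @ (Y # map E (map (\<lambda>i. i - 1) (filter (\<lambda>i. 1 < i) s))))"
      by (rule cg_appL[OF _ ey_lemma[OF 3(2)]]) simp
    ultimately show ?thesis using gen_trans 3 Y by (simp add: replicate_app_Cons_same)
  next
    case X
    obtain m where m: "k = Suc m" using 3 by (cases k) auto
    let ?s = "map Suc (filter (\<lambda>i. i < n) s)"
    have a: "cg (replicate k Y @ (map E s @ [X])) (replicate k Y @ (X # map E ?s))"
      by (rule cg_appL[OF _ ex_lemma[OF 3(2)]]) simp
    have b: "cg (replicate m Y @ ([Y, X] @ map E ?s)) (replicate m Y @ ([E 1] @ map E ?s))"
      by (rule cg_appL[OF _ cg_appR[OF _ r_yx]]) (use shiftup_lists[OF 3(2)] in auto)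
    have ss: "set (1 # ?s) \<subseteq> {1..n}" using shiftup_set[OF 3(2)] n2 by auto
    have c: "\<exists>w\<in>NF. cg (replicate m Y @ map E (1 # ?s)) w"
    proof (cases "m = 0")
      case True
      then show ?thesis using N0gen[OF ss] by simp
    next
      case False
      then show ?thesis by (intro NYgen ss) (use m 3 in auto)
    qed
    have a': "cg (w @ [c]) (replicate m Y @ ([Y, X] @ map E ?s))"
      using a 3 X m by (simp add: replicate_app_Cons_same)
    have "cg (w @ [c]) (replicate m Y @ map E (1 # ?s))"
      using cg_trans[OF a' b] by simp
    then show ?thesis using gen_trans c by blast
  next
    case (E i)
    have "\<exists>w\<in>NF. cg (replicate k Y @ map E (s @ [i])) w" by (rule NYgen) (use 3 c E in auto)
    then show ?thesis using 3 E by simp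
  qed
qed

lemma nil_NF: "[] \<in> NF"
proof -
  have "[] = map E (sorted_list_of_set {})" by simp
  then show ?thesis unfolding NF_def by blast
qed

lemma to_NF: "w \<in> lists (alphabet n) \<Longrightarrow> \<exists>w'\<in>NF. cg w w'"
proof (induction w rule: rev_induct)
  case Nil
  then show ?case using nil_NF cg_refl[of "[]"] by auto
next
  case (snoc c w)
  then obtain w' where w': "w' \<in> NF" "cg w w'" by auto
  have "cg (w @ [c]) (w' @ [c])" by (rule cg_appR[OF _ w'(2)]) (use snoc in auto)
  moreover obtain w'' where "w'' \<in> NF" "cg (w' @ [c]) w''" using closure[OF w'(1)] snoc by auto
  ultimately show ?case using cg_trans by blast
qed

end 


lemma Some_comp[simp]: "Some \<circ>\<^sub>m a = a"
  by (rule ext) (auto simp: map_comp_def split: option.split)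
lemma comp_Some[simp]: "a \<circ>\<^sub>m Some = a"
  by (rule ext) (auto simp: map_comp_def)
lemma mc_assoc: "a \<circ>\<^sub>m (b \<circ>\<^sub>m c) = (a \<circ>\<^sub>m b) \<circ>\<^sub>m c"
  by (rule ext) (auto simp: map_comp_def split: option.split)

context L begin

definition W :: "letter list \<Rightarrow> (nat \<rightharpoonup> nat)" where
  "W l = foldl (\<lambda>a c. pcomp a (letter_map n c)) Some l"

lemma foldl_gen: "foldl (\<lambda>a c. pcomp a (letter_map n c)) a l = W l \<circ>\<^sub>m a"
proof (induction l arbitrary: a)
  case Nil
  then show ?case by (simp add: W_def)
next
  case (Cons c l)
  have "W (c # l) = W l \<circ>\<^sub>m letter_map n c"
    using Cons.IH[of "pcomp Some (letter_map n c)"] by (simp add: W_def pcomp_def)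
  then show ?case using Cons.IH by (simp add: pcomp_def mc_assoc)
qed

lemma W_Nil[simp]: "W [] = Some" by (simp add: W_def)
lemma W_Cons[simp]: "W (c # l) = W l \<circ>\<^sub>m letter_map n c"
  using foldl_gen[of "pcomp Some (letter_map n c)" l] by (simp add: W_def pcomp_def)
lemma W_append: "W (u @ v) = W v \<circ>\<^sub>m W u"
  using foldl_gen[of "W u" v] by (simp add: W_def)
lemma word_eval_W: "word_eval n u = W u \<circ>\<^sub>m pid n"
  using foldl_gen[of "pid n" u] by (simp add: word_eval_def)
lemma word_eval_snoc: "word_eval n (u @ [c]) = letter_map n c \<circ>\<^sub>m word_eval n u"
  by (simp add: word_eval_def pcomp_def)

lemma W_E: "l \<noteq> [] \<Longrightarrow> W (map E l) = (\<lambda>i. if i \<in> {1..n} - set l then Some i else None)"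
proof (induction l)
  case Nil
  then show ?case by simp
next
  case (Cons a l)
  show ?case
  proof (cases "l = []")
    case True
    then show ?thesis by (simp add: te_def)
  next
    case False
    then show ?thesis using Cons.IH by (auto simp: te_def map_comp_def fun_eq_iff)
  qed
qed

lemma rel_sound: "(u, v) \<in> relsU n \<Longrightarrow> W u = W v"
proof -
  assume "(u, v) \<in> relsU n"
  then consider (U1) i where "u = [E i, E i]" "v = [E i]"
    | (U2a) "u = [X, Y]" "v = [E n]" | (U2b) "u = [Y, X]" "v = [E 1]"
    | (U3a) "u = [X, E 1]" "v = [X]" | (U3b) "u = [E 1, Y]" "v = [Y]"
    | (U4) i j where "u = [E i, E j]" "v = [E j, E i]"
    | (U5) i where "u = [X, E (i+1)]" "v = [E i, X]" "1 \<le> i" "i \<le> n - 1"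
    | (U6) "u = X # map E [2..<n+1]" "v = map E [1..<n+1]"
    unfolding relsU_def by blast
  then show ?thesis
  proof cases
    case U6
    have ne: "[2..<n+1] \<noteq> []" using n2 by simp
    have ne2: "[1..<n+1] \<noteq> []" using n2 by simp
    have s2: "set [2..<n+1] = {2..n}" by (simp add: atLeastLessThanSuc_atLeastAtMost)
    have s1: "set [1..<n+1] = {1..n}" by (simp add: atLeastLessThanSuc_atLeastAtMost)
    show ?thesis unfolding U6 W_Cons W_E[OF ne] W_E[OF ne2] s1 s2
      by (auto simp: fun_eq_iff map_comp_def tx_def)
  qed (auto simp: fun_eq_iff map_comp_def te_def tx_def ty_def)
qed

lemma sound: "cg u v \<Longrightarrow> W u = W v"
  by (induction rule: gen_cong.induct) (auto simp: rel_sound W_append)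

lemma sound_eval: "cg u v \<Longrightarrow> word_eval n u = word_eval n v"
  using sound by (simp add: word_eval_W)

end 

context L begin

definition fx :: "nat \<Rightarrow> nat set \<Rightarrow> (nat \<rightharpoonup> nat)" where
  "fx k S = (\<lambda>i. if 1 \<le> i \<and> i + k \<le> n \<and> i + k \<notin> S then Some (i + k) else None)"
definition fy :: "nat \<Rightarrow> nat set \<Rightarrow> (nat \<rightharpoonup> nat)" where
  "fy k S = (\<lambda>i. if k < i \<and> i \<le> n \<and> i - k \<notin> S then Some (i - k) else None)"

lemma pid_fx: "pid n = fx 0 {}"
  by (auto simp: pid_def fx_def fun_eq_iff)

lemma eval_X: "word_eval n (replicate k X) = fx k {}"
proof (induction k)
  case 0
  then show ?case by (simp add: word_eval_def pid_fx)
next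
  case (Suc k)
  have "word_eval n (replicate (Suc k) X) = tx n \<circ>\<^sub>m fx k {}"
    using word_eval_snoc[of "replicate k X" X] Suc by (simp add: replicate_append_same[symmetric] del: replicate_append_same)
  also have "\<dots> = fx (Suc k) {}"
    by (auto simp: fun_eq_iff map_comp_def fx_def tx_def)
  finally show ?case .
qed

lemma eval_Y: "word_eval n (replicate k Y) = fy k {}"
proof (induction k)
  case 0
  then show ?case by (auto simp: word_eval_def pid_def fy_def fun_eq_iff)
next
  case (Suc k)
  have "word_eval n (replicate (Suc k) Y) = ty n \<circ>\<^sub>m fy k {}"
    using word_eval_snoc[of "replicate k Y" Y] Suc by (simp add: replicate_append_same[symmetric] del: replicate_append_same)
  also have "\<dots> = fy (Suc k) {}"
    by (auto simp: fun_eq_iff map_comp_def fy_def ty_def)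
  finally show ?case .
qed

lemma eval_XE: "word_eval n (replicate k X @ map E l) = fx k (set l)"
proof (induction l rule: rev_induct)
  case Nil
  then show ?case by (simp add: eval_X)
next
  case (snoc a l)
  have "word_eval n (replicate k X @ map E (l @ [a])) = te n a \<circ>\<^sub>m fx k (set l)"
    using word_eval_snoc[of "replicate k X @ map E l" "E a"] snoc by simp
  also have "\<dots> = fx k (set (l @ [a]))"
    by (auto simp: fun_eq_iff map_comp_def fx_def te_def)
  finally show ?case .
qed

lemma eval_YE: "word_eval n (replicate k Y @ map E l) = fy k (set l)"
proof (induction l rule: rev_induct)
  case Nil
  then show ?case by (simp add: eval_Y)
next
  case (snoc a l)
  have "word_eval n (replicate k Y @ map E (l @ [a])) = te n a \<circ>\<^sub>m fy k (set l)"
    using word_eval_snoc[of "replicate k Y @ map E l" "E a"] snoc by simp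
  also have "\<dots> = fy k (set (l @ [a]))"
    by (auto simp: fun_eq_iff map_comp_def fy_def te_def)
  finally show ?case .
qed

lemma eval_E: "word_eval n (map E l) = fx 0 (set l)"
  using eval_XE[of 0 l] by simp

lemma gx: "1 \<le> i \<Longrightarrow> i + k \<le> n \<Longrightarrow> gpow n k i = i + k"
  by (simp add: gpow_def)

lemma gy: "n < i + k \<Longrightarrow> i \<le> n \<Longrightarrow> k < n \<Longrightarrow> gpow n k i = i + k - n"
proof -
  assume a: "n < i + k" "i \<le> n" "k < n"
  have "i - 1 + k = n + (i + k - n - 1)" using a by simp
  moreover have "i + k - n - 1 < n" using a by simp
  ultimately have "(i - 1 + k) mod n = i + k - n - 1" by simp
  then show ?thesis using a by (simp add: gpow_def)
qed

lemma fx_OCI: assumes "k < n" shows "fx k S \<in> OCI n"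
proof -
  have dom: "dom (fx k S) = {i. 1 \<le> i \<and> i + k \<le> n \<and> i + k \<notin> S}"
    by (auto simp: fx_def dom_def)
  have si: "fx k S \<in> SymInv n"
    unfolding SymInv_def
  proof (intro CollectI conjI)
    show "dom (fx k S) \<subseteq> {1..n}" unfolding dom by auto
    show "ran (fx k S) \<subseteq> {1..n}" by (auto simp: ran_def fx_def split: if_splits)
    show "inj_on (fx k S) (dom (fx k S))" by (auto simp: inj_on_def fx_def split: if_splits)
  qed
  have cy: "gpow n k \<in> CycGrp n" using assms by (auto simp: CycGrp_def)
  have eq: "fx k S = (\<lambda>i. if i \<in> dom (fx k S) then Some (gpow n k i) else None)"
    unfolding dom by (auto simp: fun_eq_iff fx_def gx)
  have "fx k S \<in> CI n" unfolding CI_def using si cy eq by blast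
  moreover have "\<forall>i\<in>dom (fx k S). \<forall>j\<in>dom (fx k S). i \<le> j \<longrightarrow> the (fx k S i) \<le> the (fx k S j)"
    unfolding dom by (auto simp: fx_def)
  ultimately show ?thesis unfolding OCI_def by blast
qed

lemma fy_OCI: assumes "1 \<le> k" "k < n" shows "fy k S \<in> OCI n"
proof -
  have dom: "dom (fy k S) = {i. k < i \<and> i \<le> n \<and> i - k \<notin> S}"
    by (auto simp: fy_def dom_def)
  have si: "fy k S \<in> SymInv n"
    unfolding SymInv_def
  proof (intro CollectI conjI)
    show "dom (fy k S) \<subseteq> {1..n}" unfolding dom by auto
    show "ran (fy k S) \<subseteq> {1..n}" by (auto simp: ran_def fy_def split: if_splits)
    show "inj_on (fy k S) (dom (fy k S))" by (auto simp: inj_on_def fy_def split: if_splits)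
  qed
  have cy: "gpow n (n - k) \<in> CycGrp n" using assms by (auto simp: CycGrp_def)
  have "\<And>i. k < i \<Longrightarrow> i \<le> n \<Longrightarrow> gpow n (n - k) i = i - k"
    using gy[of i "n - k" for i] assms by simp
  then have eq: "fy k S = (\<lambda>i. if i \<in> dom (fy k S) then Some (gpow n (n - k) i) else None)"
    unfolding dom by (auto simp: fun_eq_iff fy_def)
  have "fy k S \<in> CI n" unfolding CI_def using si cy eq by blast
  moreover have "\<forall>i\<in>dom (fy k S). \<forall>j\<in>dom (fy k S). i \<le> j \<longrightarrow> the (fy k S i) \<le> the (fy k S j)"
    unfolding dom by (auto simp: fy_def)
  ultimately show ?thesis unfolding OCI_def by blast
qed

end 

context L begin

lemma NF_code: assumes "w \<in> NF"
  shows "\<exists>k S. (w = replicate k X @ map E (sorted_list_of_set S) \<and> k < n \<and> S \<subseteq> {k+1..n}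
              \<and> (1 \<le> k \<longrightarrow> S \<noteq> {k+1..n}) \<and> word_eval n w = fx k S)
           \<or> (w = replicate k Y @ map E (sorted_list_of_set S) \<and> 1 \<le> k \<and> k < n \<and> S \<subseteq> {1..n-k}
              \<and> S \<noteq> {1..n-k} \<and> word_eval n w = fy k S)"
proof -
  from assms consider (a) S where "w = map E (sorted_list_of_set S)" "S \<subseteq> {1..n}"
    | (b) k S where "w = replicate k X @ map E (sorted_list_of_set S)" "1 \<le> k" "k < n" "S \<subseteq> {k+1..n}" "S \<noteq> {k+1..n}"
    | (c) k S where "w = replicate k Y @ map E (sorted_list_of_set S)" "1 \<le> k" "k < n" "S \<subseteq> {1..n-k}" "S \<noteq> {1..n-k}"
    unfolding NF_def by blast
  then show ?thesis
  proof cases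
    case a
    have f: "finite S" using a(2) finite_subset by blast
    have "w = replicate 0 X @ map E (sorted_list_of_set S)" using a by simp
    moreover have "word_eval n w = fx 0 S" using a f eval_E by simp
    moreover have "(0::nat) < n" using n2 by simp
    moreover have "S \<subseteq> {0+1..n}" using a(2) by simp
    ultimately show ?thesis by (intro exI[of _ 0] exI[of _ S] disjI1) simp
  next
    case b
    have f: "finite S" using b(4) finite_subset by blast
    have "word_eval n w = fx k S" using b f eval_XE by simp
    then show ?thesis using b by blast
  next
    case c
    have f: "finite S" using c(4) finite_subset by blast
    have "word_eval n w = fy k S" using c f eval_YE by simp
    then show ?thesis using c by blast
  qed
qed

lemma NF_OCI: "w \<in> NF \<Longrightarrow> word_eval n w \<in> OCI n"
proof -
  assume "w \<in> NF"
  from NF_code[OF this] obtain k S where "(k < n \<and> word_eval n w = fx k S) \<or> (1 \<le> k \<and> k < n \<and> word_eval n w = fy k S)"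
    by blast
  then show ?thesis using fx_OCI fy_OCI by auto
qed

lemma fx_some: "1 \<le> k \<Longrightarrow> S \<subseteq> {k+1..n} \<Longrightarrow> S \<noteq> {k+1..n} \<Longrightarrow> \<exists>i. fx k S i = Some (i + k)"
proof -
  assume a: "1 \<le> k" "S \<subseteq> {k+1..n}" "S \<noteq> {k+1..n}"
  then obtain j where j: "j \<in> {k+1..n}" "j \<notin> S" by blast
  then have "fx k S (j - k) = Some (j - k + k)" by (auto simp: fx_def)
  then show ?thesis by blast
qed

lemma fy_some: "1 \<le> k \<Longrightarrow> S \<subseteq> {1..n-k} \<Longrightarrow> S \<noteq> {1..n-k} \<Longrightarrow> \<exists>i. k < i \<and> fy k S i = Some (i - k)"
proof -
  assume a: "1 \<le> k" "S \<subseteq> {1..n-k}" "S \<noteq> {1..n-k}"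
  then obtain j where j: "j \<in> {1..n-k}" "j \<notin> S" by blast
  then have "fy k S (j + k) = Some (j + k - k)" by (auto simp: fy_def)
  moreover have "k < j + k" using j by auto
  ultimately show ?thesis by blast
qed

lemma fx_S: "S \<subseteq> {k+1..n} \<Longrightarrow> S = {j. k < j \<and> j \<le> n \<and> fx k S (j - k) = None}"
  by (auto simp: fx_def)

lemma fy_S: "S \<subseteq> {1..n-k} \<Longrightarrow> S = {j. 1 \<le> j \<and> j + k \<le> n \<and> fy k S (j + k) = None}"
proof -
  assume a: "S \<subseteq> {1..n-k}"
  have "\<forall>x\<in>S. 1 \<le> x \<and> x + k \<le> n"
  proof
    fix x assume "x \<in> S"
    then have "1 \<le> x \<and> x \<le> n - k" using a by auto
    then show "1 \<le> x \<and> x + k \<le> n" by linarith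
  qed
  then show ?thesis by (auto simp: fy_def)
qed

lemma fx_val: "fx k S i = Some v \<Longrightarrow> v = i + k"
  by (auto simp: fx_def split: if_splits)
lemma fy_val: "fy k S i = Some v \<Longrightarrow> v = i - k \<and> k < i"
  by (auto simp: fy_def split: if_splits)

end 

context L begin

lemma xx1: assumes eq: "fx k S = fx k' S'" and "1 \<le> k" "S \<subseteq> {k+1..n}" "S \<noteq> {k+1..n}"
  shows "k = k'"
proof -
  obtain i where h: "fx k S i = Some (i + k)" using fx_some assms(2-4) by blast
  then have "fx k' S' i = Some (i + k)" by (simp only: eq)
  then have "i + k = i + k'" by (rule fx_val)
  then show ?thesis by simp
qed

lemma xy1: assumes eq: "fx k S = fy k' S'" and "1 \<le> k'" "S' \<subseteq> {1..n-k'}" "S' \<noteq> {1..n-k'}"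
  shows False
proof -
  obtain i where h: "k' < i" "fy k' S' i = Some (i - k')" using fy_some assms(2-4) by blast
  then have "fx k S i = Some (i - k')" by (simp only: eq)
  then have "i - k' = i + k" by (rule fx_val)
  then show False using h(1) assms(2) by linarith
qed

lemma yy1: assumes eq: "fy k S = fy k' S'" and "1 \<le> k" "S \<subseteq> {1..n-k}" "S \<noteq> {1..n-k}"
  shows "k = k'"
proof -
  obtain i where h: "k < i" "fy k S i = Some (i - k)" using fy_some assms(2-4) by blast
  then have "fy k' S' i = Some (i - k)" by (simp only: eq)
  then have "i - k = i - k' \<and> k' < i" by (rule fy_val)
  then show ?thesis using h(1) by linarith
qed

lemma xx2: assumes eq: "fx k S = fx k' S'" and "1 \<le> k \<longrightarrow> S \<noteq> {k+1..n}" "1 \<le> k' \<longrightarrow> S' \<noteq> {k'+1..n}"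
    "S \<subseteq> {k+1..n}" "S' \<subseteq> {k'+1..n}"
  shows "k = k'"
proof (cases "1 \<le> k")
  case True
  then show ?thesis using xx1[OF eq True assms(4)] assms(2) by blast
next
  case False
  show ?thesis
  proof (cases "1 \<le> k'")
    case True
    then show ?thesis using xx1[OF eq[symmetric] True assms(5)] assms(3) by blast
  next
    case False
    then show ?thesis using \<open>\<not> 1 \<le> k\<close> by simp
  qed
qed

lemma NF_inj:
  assumes "w1 \<in> NF" "w2 \<in> NF" "word_eval n w1 = word_eval n w2"
  shows "w1 = w2"
proof -
  obtain k S where A: "(w1 = replicate k X @ map E (sorted_list_of_set S) \<and> k < n \<and> S \<subseteq> {k+1..n}
              \<and> (1 \<le> k \<longrightarrow> S \<noteq> {k+1..n}) \<and> word_eval n w1 = fx k S)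
           \<or> (w1 = replicate k Y @ map E (sorted_list_of_set S) \<and> 1 \<le> k \<and> k < n \<and> S \<subseteq> {1..n-k}
              \<and> S \<noteq> {1..n-k} \<and> word_eval n w1 = fy k S)" using NF_code[OF assms(1)] by blast
  obtain k' S' where B: "(w2 = replicate k' X @ map E (sorted_list_of_set S') \<and> k' < n \<and> S' \<subseteq> {k'+1..n}
              \<and> (1 \<le> k' \<longrightarrow> S' \<noteq> {k'+1..n}) \<and> word_eval n w2 = fx k' S')
           \<or> (w2 = replicate k' Y @ map E (sorted_list_of_set S') \<and> 1 \<le> k' \<and> k' < n \<and> S' \<subseteq> {1..n-k'}
              \<and> S' \<noteq> {1..n-k'} \<and> word_eval n w2 = fy k' S')" using NF_code[OF assms(2)] by blast
  from A B assms(3) show ?thesis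
  proof (elim disjE conjE)
    assume a: "w1 = replicate k X @ map E (sorted_list_of_set S)" "k < n" "S \<subseteq> {k+1..n}"
      "1 \<le> k \<longrightarrow> S \<noteq> {k+1..n}" "word_eval n w1 = fx k S"
      and b: "w2 = replicate k' X @ map E (sorted_list_of_set S')" "k' < n" "S' \<subseteq> {k'+1..n}"
      "1 \<le> k' \<longrightarrow> S' \<noteq> {k'+1..n}" "word_eval n w2 = fx k' S'"
      and e: "word_eval n w1 = word_eval n w2"
    have eq: "fx k S = fx k' S'" using a(5) b(5) e by simp
    have kk: "k = k'" by (rule xx2[OF eq a(4) b(4) a(3) b(3)])
    have "S = S'" using fx_S[OF a(3)] fx_S[OF b(3)] eq kk by simp
    then show ?thesis using a(1) b(1) kk by simp
  next
    assume a: "word_eval n w1 = fx k S"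
      and b: "1 \<le> k'" "S' \<subseteq> {1..n-k'}" "S' \<noteq> {1..n-k'}" "word_eval n w2 = fy k' S'"
      and e: "word_eval n w1 = word_eval n w2"
    have "fx k S = fy k' S'" using a b e by simp
    from xy1[OF this b(1-3)] show ?thesis ..
  next
    assume a: "1 \<le> k" "S \<subseteq> {1..n-k}" "S \<noteq> {1..n-k}" "word_eval n w1 = fy k S"
      and b: "word_eval n w2 = fx k' S'"
      and e: "word_eval n w1 = word_eval n w2"
    have "fx k' S' = fy k S" using a b e by simp
    from xy1[OF this a(1-3)] show ?thesis ..
  next
    assume a: "w1 = replicate k Y @ map E (sorted_list_of_set S)" "1 \<le> k" "k < n" "S \<subseteq> {1..n-k}"
      "S \<noteq> {1..n-k}" "word_eval n w1 = fy k S"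
      and b: "w2 = replicate k' Y @ map E (sorted_list_of_set S')" "1 \<le> k'" "k' < n" "S' \<subseteq> {1..n-k'}"
      "S' \<noteq> {1..n-k'}" "word_eval n w2 = fy k' S'"
      and e: "word_eval n w1 = word_eval n w2"
    have eq: "fy k S = fy k' S'" using a(6) b(6) e by simp
    have kk: "k = k'" by (rule yy1[OF eq a(2,4,5)])
    have "S = S'" using fy_S[OF a(4)] fy_S[OF b(4)] eq kk by simp
    then show ?thesis using a(1) b(1) kk by simp
  qed
qed

end 

context L begin

lemma surj_OCI: assumes "a \<in> OCI n" shows "\<exists>w\<in>lists (alphabet n). word_eval n w = a"
proof -
  from assms have aS: "a \<in> SymInv n" and ord: "\<forall>i\<in>dom a. \<forall>j\<in>dom a. i \<le> j \<longrightarrow> the (a i) \<le> the (a j)"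
    and "\<exists>\<sigma>\<in>CycGrp n. a = (\<lambda>i. if i \<in> dom a then Some (\<sigma> i) else None)"
    unfolding OCI_def CI_def by auto
  then obtain k where k: "k < n" and aeq: "a = (\<lambda>i. if i \<in> dom a then Some (gpow n k i) else None)"
    unfolding CycGrp_def by blast
  define D where "D = dom a"
  have D: "D \<subseteq> {1..n}" using aS unfolding SymInv_def D_def by blast
  have Dm: "i \<in> D \<Longrightarrow> 1 \<le> i \<and> i \<le> n" for i using D by auto
  have av: "a i = (if i \<in> D then Some (gpow n k i) else None)" for i
    unfolding D_def by (subst aeq) simp
  show ?thesis
  proof (cases "k = 0")
    case True
    define S where "S = {1..n} - D"
    have fS: "finite S" unfolding S_def by simp
    have w: "map E (sorted_list_of_set S) \<in> lists (alphabet n)" using fS by (auto simp: S_def)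
    have "word_eval n (map E (sorted_list_of_set S)) = fx 0 S" using eval_E fS by simp
    also have "fx 0 S = a"
    proof (rule ext)
      fix i
      show "fx 0 S i = a i"
        using Dm[of i] gx[of i 0] True by (auto simp: fx_def av S_def)
    qed
    finally show ?thesis using w by blast
  next
    case False
    have dich: "(\<forall>i\<in>D. i + k \<le> n) \<or> (\<forall>i\<in>D. n < i + k)"
    proof (rule ccontr)
      assume nt: "\<not> ?thesis"
      then have "\<exists>i\<in>D. n < i + k" "\<exists>j\<in>D. j + k \<le> n" by (auto simp: not_le not_less)
      then obtain i j where ij: "i \<in> D" "n < i + k" "j \<in> D" "j + k \<le> n" by blast
      have ji: "j \<le> i" using ij by linarith
      have "a j = Some (j + k)" using av[of j] ij gx[of j k] Dm[of j] by simp
      moreover have "a i = Some (i + k - n)" using av[of i] ij gy[of i k] Dm[of i] k by simp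
      moreover have "the (a j) \<le> the (a i)" using ord[rule_format, of j i] ij(1,3) ji unfolding D_def by blast
      ultimately have "j + k \<le> i + k - n" by simp
      then show False using Dm[of i] Dm[of j] ij by linarith
    qed
    then show ?thesis
    proof
      assume A: "\<forall>i\<in>D. i + k \<le> n"
      define S where "S = {j. k < j \<and> j \<le> n \<and> j - k \<notin> D}"
      have Ss: "S \<subseteq> {1..n}" unfolding S_def by auto
      have fS: "finite S" using Ss finite_subset by blast
      have w: "replicate k X @ map E (sorted_list_of_set S) \<in> lists (alphabet n)" using fS Ss by auto
      have "word_eval n (replicate k X @ map E (sorted_list_of_set S)) = fx k S" using eval_XE fS by simp
      also have "fx k S = a"
      proof (rule ext)
        fix i
        show "fx k S i = a i"
        proof (cases "i \<in> D")
          case True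
          then show ?thesis using Dm[of i] A gx[of i k] by (auto simp: fx_def av S_def)
        next
          case False
          then show ?thesis by (auto simp: fx_def av S_def)
        qed
      qed
      finally show ?thesis using w by blast
    next
      assume A: "\<forall>i\<in>D. n < i + k"
      define m where "m = n - k"
      define S where "S = {j. 1 \<le> j \<and> j + m \<le> n \<and> j + m \<notin> D}"
      have Ss: "S \<subseteq> {1..n}" unfolding S_def by auto
      have fS: "finite S" using Ss finite_subset by blast
      have w: "replicate m Y @ map E (sorted_list_of_set S) \<in> lists (alphabet n)" using fS Ss by auto
      have "word_eval n (replicate m Y @ map E (sorted_list_of_set S)) = fy m S" using eval_YE fS by simp
      also have "fy m S = a"
      proof (rule ext)
        fix i
        show "fy m S i = a i"
        proof (cases "i \<in> D")
          case True
          have g: "gpow n k i = i + k - n" using gy[of i k] Dm[of i] A True k by simp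
          have "m < i" using A True k unfolding m_def by auto
          then show ?thesis using Dm[of i] True g k by (auto simp: fy_def av S_def m_def)
        next
          case False
          then show ?thesis by (auto simp: fy_def av S_def)
        qed
      qed
      finally show ?thesis using w by blast
    qed
  qed
qed

end


lemma card_alph: "card (alphabet n) = n + 2"
proof -
  have "alphabet n = {X, Y} \<union> E ` {1..n}" by (simp add: alphabet_def)
  moreover have "card ({X, Y} \<union> E ` {1..n}) = card {X, Y} + card (E ` {1..n})"
    by (rule card_Un_disjoint) auto
  moreover have "card (E ` {1..n}) = n" by (simp add: card_image inj_on_def)
  ultimately show ?thesis by simp
qed

definition PP :: "nat \<Rightarrow> (nat \<times> nat) set" where
  "PP n = {(i, j). 1 \<le> i \<and> i < j \<and> j \<le> n}"

lemma PP_fin: "finite (PP n)"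
proof -
  have "PP n \<subseteq> {1..n} \<times> {1..n}" by (auto simp: PP_def)
  then show ?thesis by (rule finite_subset) simp
qed

lemma PP_card: "2 * card (PP n) = n * (n - 1)"
proof (induction n)
  case 0
  have "PP 0 = {}" by (auto simp: PP_def)
  then show ?case by simp
next
  case (Suc n)
  have eq: "PP (Suc n) = PP n \<union> (\<lambda>i. (i, Suc n)) ` {1..n}"
    by (auto simp: PP_def)
  have "card (PP (Suc n)) = card (PP n) + card ((\<lambda>i. (i, Suc n)) ` {1..n})"
    unfolding eq by (rule card_Un_disjoint) (simp add: PP_fin, simp, auto simp: PP_def)
  moreover have "card ((\<lambda>i. (i, Suc n)) ` {1..n}) = n" by (simp add: card_image inj_on_def)
  ultimately have "2 * card (PP (Suc n)) = n * (n - 1) + 2 * n" using Suc by simp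
  also have "\<dots> = Suc n * (Suc n - 1)" by (cases n) (auto simp: algebra_simps)
  finally show ?case .
qed

lemma card_rels: assumes "2 \<le> n" shows "2 * card (relsU n) = n^2 + 3*n + 8"
proof -
  define A1 where "A1 = {([E i, E i], [E i]) | i. 1 \<le> i \<and> i \<le> n}"
  define A2 where "A2 = {([X, Y], [E n]), ([Y, X], [E 1])}"
  define A3 where "A3 = {([X, E 1], [X]), ([E 1, Y], [Y])}"
  define A4 where "A4 = {([E i, E j], [E j, E i]) | i j. 1 \<le> i \<and> i < j \<and> j \<le> n}"
  define A5 where "A5 = {([X, E (i + 1)], [E i, X]) | i. 1 \<le> i \<and> i \<le> n - 1}"
  define A6 where "A6 = {(X # map E [2..<n+1], map E [1..<n+1])}"
  have R: "relsU n = A1 \<union> A2 \<union> A3 \<union> A4 \<union> A5 \<union> A6"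
    unfolding relsU_def A1_def A2_def A3_def A4_def A5_def A6_def by simp
  have i1: "A1 = (\<lambda>i. ([E i, E i], [E i])) ` {1..n}" unfolding A1_def by auto
  have i4: "A4 = (\<lambda>(i, j). ([E i, E j], [E j, E i])) ` PP n" unfolding A4_def PP_def by auto
  have i5: "A5 = (\<lambda>i. ([X, E (i + 1)], [E i, X])) ` {1..n-1}" unfolding A5_def by auto
  have c1: "card A1 = n" unfolding i1 by (simp add: card_image inj_on_def)
  have c2: "card A2 = 2" unfolding A2_def by simp
  have c3: "card A3 = 2" unfolding A3_def by simp
  have c4: "card A4 = card (PP n)" unfolding i4 by (rule card_image) (auto simp: inj_on_def)
  have c5: "card A5 = n - 1" unfolding i5 by (simp add: card_image inj_on_def)
  have c6: "card A6 = 1" unfolding A6_def by simp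
  have f: "finite A1" "finite A2" "finite A3" "finite A4" "finite A5" "finite A6"
    unfolding i1 i4 i5 A2_def A3_def A6_def by (auto simp: PP_fin)
  have XnE: "X \<notin> set (map E l)" "Y \<notin> set (map E l)" for l by auto
  have d1: "A1 \<inter> A2 = {}" unfolding A1_def A2_def by auto
  have d2: "(A1 \<union> A2) \<inter> A3 = {}" unfolding A1_def A2_def A3_def by auto
  have d3: "(A1 \<union> A2 \<union> A3) \<inter> A4 = {}" unfolding A1_def A2_def A3_def A4_def by auto
  have d4: "(A1 \<union> A2 \<union> A3 \<union> A4) \<inter> A5 = {}" unfolding A1_def A2_def A3_def A4_def A5_def by auto
  have n6: "(X # map E [2..<n+1], map E [1..<n+1]) \<notin> A1 \<union> A2 \<union> A3 \<union> A4 \<union> A5"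
  proof -
    have a: "map E l \<noteq> [Y]" "map E l \<noteq> [X]" "map E l \<noteq> [E i, X]" for l i
      by (auto simp: map_eq_Cons_conv)
    show ?thesis unfolding A1_def A2_def A3_def A4_def A5_def using a by auto
  qed
  have d5: "(A1 \<union> A2 \<union> A3 \<union> A4 \<union> A5) \<inter> A6 = {}" using n6 unfolding A6_def by auto
  have "card (relsU n) = n + 2 + 2 + card (PP n) + (n - 1) + 1"
    unfolding R
    by (simp add: card_Un_disjoint f d1 d2 d3 d4 d5 c1 c2 c3 c4 c5 c6)
  then show ?thesis using PP_card[of n] assms by (simp add: power2_eq_square algebra_simps)
qed


context L begin

lemma inj_letters: "inj_on (letter_map n) (alphabet n)"
proof (rule inj_onI)
  fix c d assume c: "c \<in> alphabet n" and d: "d \<in> alphabet n" and eq: "letter_map n c = letter_map n d"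
  have tx1: "tx n 1 = Some 2" using n2 by (simp add: tx_def)
  have ty1: "ty n 1 = None" by (simp add: ty_def)
  have ty2: "ty n 2 = Some 1" using n2 by (simp add: ty_def)
  have te1: "te n i 1 \<noteq> Some 2" for i by (simp add: te_def)
  have te2: "te n i 2 \<noteq> Some 1" for i by (simp add: te_def)
  have tx2: "tx n 2 \<noteq> Some 1" by (simp add: tx_def)
  have teii: "te n i i = None" for i by (simp add: te_def)
  have teji: "1 \<le> i \<Longrightarrow> i \<le> n \<Longrightarrow> i \<noteq> j \<Longrightarrow> te n j i = Some i" for i j by (simp add: te_def)
  show "c = d"
  proof (cases c)
    case X
    then show ?thesis using eq d tx1 ty1 te1 by (cases d) (auto dest: fun_cong[where x = 1])
  next
    case Y
    then show ?thesis using eq d tx1 ty1 ty2 te2 tx2 by (cases d) (auto dest: fun_cong[where x = 1] fun_cong[where x = 2])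
  next
    case (E i)
    show ?thesis
    proof (cases d)
      case X
      then show ?thesis using eq E tx1 te1 by (auto dest: fun_cong[where x = 1])
    next
      case Y
      then show ?thesis using eq E ty2 te2 by (auto dest: fun_cong[where x = 2])
    next
      case (E j)
      show ?thesis
      proof (rule ccontr)
        assume "c \<noteq> d"
        then have ij: "i \<noteq> j" using E \<open>c = letter.E i\<close> by simp
        have "te n i i = te n j i" using eq E \<open>c = letter.E i\<close> by simp
        then show False using teii teji[of i j] ij c \<open>c = letter.E i\<close> by simp
      qed
    qed
  qed
qed

lemma main_pres: "is_presentation (alphabet n) (relsU n) (letter_map n) (word_eval n) (OCI n)"
  unfolding is_presentation_def
proof (intro conjI)
  show "relsU n \<subseteq> lists (alphabet n) \<times> lists (alphabet n)" by (rule relsU_lists)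
  show "inj_on (letter_map n) (alphabet n)" by (rule inj_letters)
  show "word_eval n ` lists (alphabet n) = OCI n"
  proof
    show "word_eval n ` lists (alphabet n) \<subseteq> OCI n"
    proof
      fix a assume "a \<in> word_eval n ` lists (alphabet n)"
      then obtain w where w: "w \<in> lists (alphabet n)" "a = word_eval n w" by blast
      obtain w' where "w' \<in> NF" "cg w w'" using to_NF[OF w(1)] by blast
      then show "a \<in> OCI n" using w sound_eval NF_OCI by metis
    qed
    show "OCI n \<subseteq> word_eval n ` lists (alphabet n)"
      using surj_OCI by blast
  qed
  show "{(u, v). u \<in> lists (alphabet n) \<and> v \<in> lists (alphabet n) \<and> word_eval n u = word_eval n v}
        = {(u, v). cg u v}"
  proof (intro equalityI subsetI)
    fix p assume "p \<in> {(u, v). u \<in> lists (alphabet n) \<and> v \<in> lists (alphabet n) \<and> word_eval n u = word_eval n v}"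
    then obtain u v where p: "p = (u, v)" and a: "u \<in> lists (alphabet n)" "v \<in> lists (alphabet n)" "word_eval n u = word_eval n v"
      by blast
    obtain u' where u': "u' \<in> NF" "cg u u'" using to_NF a by blast
    obtain v' where v': "v' \<in> NF" "cg v v'" using to_NF a by blast
    have "word_eval n u' = word_eval n v'" using a sound_eval[OF u'(2)] sound_eval[OF v'(2)] by simp
    then have "u' = v'" using NF_inj u'(1) v'(1) by blast
    then have "cg u v" using u'(2) v'(2) cg_trans cg_sym by metis
    then show "p \<in> {(u, v). cg u v}" using p by simp
  next
    fix p assume "p \<in> {(u, v). cg u v}"
    then obtain u v where p: "p = (u, v)" and c: "cg u v" by blast
    have "u \<in> lists (alphabet n) \<and> v \<in> lists (alphabet n) \<and> word_eval n u = word_eval n v"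
      using cg_lists[OF c] sound_eval[OF c] by blast
    then show "p \<in> {(u, v). u \<in> lists (alphabet n) \<and> v \<in> lists (alphabet n) \<and> word_eval n u = word_eval n v}"
      using p by simp
  qed
qed

end

theorem theorem2p16:
  fixes n :: nat
  assumes "n \<ge> 2"
  shows "is_presentation (alphabet n) (relsU n) (letter_map n) (word_eval n) (OCI n)
         \<and> card (alphabet n) = n + 2
         \<and> 2 * card (relsU n) = n^2 + 3*n + 8"
proof -
  interpret L n by standard (rule assms)
  show ?thesis using main_pres card_alph card_rels[OF assms] by blast
qed


end
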